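(* Let $R>0$, $K>0$, $B_i>0$, $C_i\ge0$, $\alpha\in[0,1)$ and $c\ge0$ with $\alpha>0$ or $c>0$. For $(p,m)$ in $S=\{(p,m): p\ge0,\ m\ge0,\ p+m\le B_i\}$ define $$U_i(p,m)=\frac{\big((1-\alpha)p+m\big)R}{K+p+m}-c\,e^{-p}\,\mathbf{1}[p>0]-C_i\,\mathbf{1}[m>0].$$ Then every maximizer $(p^*,m^* )$ of $U_i$ over $S$ with $(p^*,m^* )\neq(0,0)$ satisfies $(p^*,m^* )\in\{(B_i,0),(0,B_i)\}$; i.e., a participating stakeholder's best response is to invest all its stakes either in the pool or for self-mining.
   Context: Setting: a proof-of-stake blockchain with one stake pool (own stake $\sigma>0$, announced cost parameter $c$ and fee $\alpha$) and $N$ stakeholders. Stakeholder $i$ has budget $B_i$ and operational cost $C_i$, and chooses $p$ stakes to invest in the pool and $m$ stakes for self-mining with $p+m\le B_i$; the block reward is $R$. $K$ is the total stake of the pool owner and all other stakeholders (held fixed), so the total network stake is $K+p+m$. Investing $p>0$ in the pool yields expected reward $\frac{p}{K+p+m}(1-\alpha)R-c\,e^{-p}$; self-mining with $m>0$ yields $\frac{m}{K+p+m}R-C_i$; not participating ($p=m=0$) yields $0$. *)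

theory Defs
  imports Complex_Main
begin

definition U :: "real \<Rightarrow> real \<Rightarrow> real \<Rightarrow> real \<Rightarrow> real \<Rightarrow> real \<Rightarrow> real \<Rightarrow> real" where
  "U R K alpha c Ci p m =
     ((1 - alpha) * p + m) * R / (K + p + m)
     - (if p > 0 then c * exp (- p) else 0)
     - (if m > 0 then Ci else 0)"

definition S :: "real \<Rightarrow> (real \<times> real) set" where
  "S B = {(p, m). p \<ge> 0 \<and> m \<ge> 0 \<and> p + m \<le> B}"

end

theory Submission
  imports Defs
begin

lemma frac_mono: fixes K p B :: real assumes "K > 0" "0 \<le> p" "p < B"
  shows "p / (K + p) < B / (K + B)"
proof -
  have "p * (K + B) < B * (K + p)" using assms by (simp add: algebra_simps)
  thus ?thesis using assms by (simp add: divide_simps)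
qed

theorem theorem3:
  fixes R K B Ci alpha c p m :: real
  assumes "R > 0" and "K > 0" and "B > 0" and "Ci \<ge> 0"
    and "0 \<le> alpha" and "alpha < 1" and "c \<ge> 0" and "alpha > 0 \<or> c > 0"
    and "(p, m) \<in> S B"
    and "\<forall>(p', m') \<in> S B. U R K alpha c Ci p' m' \<le> U R K alpha c Ci p m"
    and "(p, m) \<noteq> (0, 0)"
  shows "(p, m) \<in> {(B, 0), (0, B)}"
proof -
  have p0: "p \<ge> 0" and m0: "m \<ge> 0" and pmB: "p + m \<le> B" using assms(9) by (auto simp: S_def)
  have opt: "\<And>p' m'. p' \<ge> 0 \<Longrightarrow> m' \<ge> 0 \<Longrightarrow> p' + m' \<le> B \<Longrightarrow> U R K alpha c Ci p' m' \<le> U R K alpha c Ci p m"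
    using assms(10) by (auto simp: S_def)
  consider "p > 0" "m > 0" | "p = 0" "m > 0" | "p > 0" "m = 0"
    using p0 m0 assms(11) by force
  then show ?thesis
  proof cases
    case 1
    have le: "U R K alpha c Ci 0 (p+m) \<le> U R K alpha c Ci p m" using opt[of 0 "p+m"] p0 m0 pmB by simp
    have pos: "K + p + m > 0" using assms(2) p0 m0 by simp
    have "alpha * p * R / (K + p + m) + c * exp (-p) > 0"
    proof (cases "alpha > 0")
      case True
      have "alpha * p * R / (K + p + m) > 0" using True 1 assms(1) pos by simp
      moreover have "c * exp (-p) \<ge> 0" using assms(7) by simp
      ultimately show ?thesis by linarith
    next
      case False
      hence "c > 0" using assms(8) by simp
      hence "c * exp (-p) > 0" by simp
      moreover have "alpha * p * R / (K + p + m) \<ge> 0" using assms(5) p0 assms(1) pos by simp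
      ultimately show ?thesis by linarith
    qed
    moreover have "U R K alpha c Ci 0 (p+m) - U R K alpha c Ci p m = alpha * p * R / (K + p + m) + c * exp (-p)"
    proof -
      have "(p + m) * R / (K + 0 + (p + m)) - ((1 - alpha) * p + m) * R / (K + p + m) = (((p + m) * R) - ((1 - alpha) * p + m) * R) / (K + p + m)"
        by (simp add: diff_divide_distrib add.assoc)
      also have "\<dots> = alpha * p * R / (K + p + m)" by (simp add: algebra_simps)
      finally show ?thesis using 1 unfolding U_def by simp
    qed
    ultimately show ?thesis using le by linarith
  next
    case 2
    show ?thesis
    proof (rule ccontr)
      assume "\<not> ?thesis"
      hence mB: "m < B" using 2 pmB by auto
      have le: "U R K alpha c Ci 0 B \<le> U R K alpha c Ci p m" using opt[of 0 B] assms(3) by simp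
      have "m / (K + m) < B / (K + B)" using frac_mono[OF assms(2) m0 mB] .
      hence "m / (K + m) * R < B / (K + B) * R" using assms(1) by (rule mult_strict_right_mono)
      moreover have "U R K alpha c Ci p m = m / (K + m) * R - Ci" using 2 unfolding U_def by simp
      moreover have "U R K alpha c Ci 0 B = B / (K + B) * R - Ci" using assms(3) unfolding U_def by simp
      ultimately show False using le by linarith
    qed
  next
    case 3
    show ?thesis
    proof (rule ccontr)
      assume "\<not> ?thesis"
      hence pB: "p < B" using 3 pmB by auto
      have le: "U R K alpha c Ci B 0 \<le> U R K alpha c Ci p m" using opt[of B 0] assms(3) by simp
      have "p / (K + p) < B / (K + B)" using frac_mono[OF assms(2) p0 pB] .
      hence a: "p / (K + p) * ((1 - alpha) * R) < B / (K + B) * ((1 - alpha) * R)" using assms(1) assms(6) by (intro mult_strict_right_mono) auto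
      have "exp (-B) \<le> exp (-p)" using pB by simp
      hence b: "c * exp (-B) \<le> c * exp (-p)" using assms(7) by (simp add: mult_left_mono)
      have "U R K alpha c Ci p m = p / (K + p) * ((1 - alpha) * R) - c * exp (-p)" using 3 unfolding U_def by simp
      moreover have "U R K alpha c Ci B 0 = B / (K + B) * ((1 - alpha) * R) - c * exp (-B)" using assms(3) unfolding U_def by simp
      ultimately show False using le a b by linarith
    qed
  qed
qed

end
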